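(* Let $(Y,\mathfrak C,\gamma)$ be a standard non-atomic probability space, let $\mathbf B=(B_n)_{n=1}^\infty$ be a sequence of sets in $\mathfrak C$ with $\gamma(B_n)>0$, and let $\gamma^{\mathbf B}$ be the restricted infinite power of $\gamma$ with respect to $\mathbf B$ on $(X,\mathfrak B)=(Y,\mathfrak C)^{\otimes\mathbb N}$. Let $T$ be a $\gamma$-preserving Borel bijection of $Y$ and $\mathbf T=\bigotimes_{n=1}^\infty T$ the coordinatewise map on $X$. If $\sum_{n=1}^\infty \frac{\gamma(B_n\triangle TB_n)}{\gamma(B_n)}<\infty$, then $\mathbf T$ preserves $\gamma^{\mathbf B}$.
   Context: For $n\in\mathbb N$ put $\mathbf B^n=Y^n\times B_{n+1}\times B_{n+2}\times\cdots$, so $\mathbf B^1\subset\mathbf B^2\subset\cdots$. The restricted infinite power $\gamma^{\mathbf B}$ is the unique $\sigma$-finite measure on $(X,\mathfrak B)$, supported on $\bigcup_n\mathbf B^n$, whose restriction to each $\mathbf B^n$ equals $\frac{\gamma}{\gamma(B_1)}\otimes\cdots\otimes\frac{\gamma}{\gamma(B_n)}\otimes\frac{\gamma\restriction B_{n+1}}{\gamma(B_{n+1})}\otimes\frac{\gamma\restriction B_{n+2}}{\gamma(B_{n+2})}\otimes\cdots$ (these restrictions are compatible). *)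

theory Defs
  imports "HOL-Probability.Probability"
begin

definition nonatomic :: "'a measure \<Rightarrow> bool" where
  "nonatomic M \<longleftrightarrow> (\<forall>A\<in>sets M. 0 < measure M A \<longrightarrow>
      (\<exists>C\<in>sets M. C \<subseteq> A \<and> 0 < measure M C \<and> measure M C < measure M A))"

definition preserves :: "'a measure \<Rightarrow> ('a \<Rightarrow> 'a) \<Rightarrow> bool" where
  "preserves M f \<longleftrightarrow> f \<in> M \<rightarrow>\<^sub>M M \<and>
      (\<forall>A\<in>sets M. emeasure M (f -` A \<inter> space M) = emeasure M A)"

text \<open>Coordinates are indexed from 0. The set B^n: all coordinates k >= n lie in B k.\<close>
definition Bset :: "(nat \<Rightarrow> 'a set) \<Rightarrow> nat \<Rightarrow> (nat \<Rightarrow> 'a) set" where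
  "Bset B n = {x. \<forall>k\<ge>n. x k \<in> B k}"

definition norm_restr :: "'a measure \<Rightarrow> 'a set \<Rightarrow> 'a measure" where
  "norm_restr M C = density M (\<lambda>y. ennreal (1 / measure M C) * indicator C y)"

text \<open>The product measure
  gamma/gamma(B_0) x ... x gamma/gamma(B_{n-1}) x gamma|B_n/gamma(B_n) x ...,
  with the scalar factors pulled out of the product.\<close>
definition prod_n :: "'a measure \<Rightarrow> (nat \<Rightarrow> 'a set) \<Rightarrow> nat \<Rightarrow> (nat \<Rightarrow> 'a) measure" where
  "prod_n M B n = scale_measure (ennreal (\<Prod>k<n. 1 / measure M (B k)))
      (PiM UNIV (\<lambda>k. if k < n then M else norm_restr M (B k)))"

definition restricted_infinite_power ::
  "'a measure \<Rightarrow> (nat \<Rightarrow> 'a set) \<Rightarrow> (nat \<Rightarrow> 'a) measure \<Rightarrow> bool" where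
  "restricted_infinite_power M B \<nu> \<longleftrightarrow>
     sets \<nu> = sets (PiM UNIV (\<lambda>_. M)) \<and>
     sigma_finite_measure \<nu> \<and>
     emeasure \<nu> (space \<nu> - (\<Union>n. Bset B n)) = 0 \<and>
     (\<forall>n. \<forall>A\<in>sets \<nu>. emeasure \<nu> (A \<inter> Bset B n) = emeasure (prod_n M B n) A)"

end

theory Submission
  imports Defs
begin

lemma emeasure_norm_restr:
  assumes "A \<in> sets M" "C \<in> sets M"
  shows "emeasure (norm_restr M C) A = ennreal (1 / measure M C) * emeasure M (A \<inter> C)"
proof -
  have "emeasure (norm_restr M C) A = (\<integral>\<^sup>+ y. ennreal (1 / measure M C) * indicator (A \<inter> C) y \<partial>M)"
    unfolding norm_restr_def using assms
    by (subst emeasure_density) (auto intro!: nn_integral_cong simp: indicator_def)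
  also have "\<dots> = ennreal (1 / measure M C) * emeasure M (A \<inter> C)"
    using assms by (intro nn_integral_cmult_indicator) auto
  finally show ?thesis .
qed

lemma sets_norm_restr[simp]: "sets (norm_restr M C) = sets M"
  by (simp add: norm_restr_def)

lemma prob_space_norm_restr:
  assumes "finite_measure M" "C \<in> sets M" "measure M C > 0"
  shows "prob_space (norm_restr M C)"
proof
  interpret finite_measure M by fact
  have "space (norm_restr M C) = space M" by (simp add: norm_restr_def)
  then show "emeasure (norm_restr M C) (space (norm_restr M C)) = 1"
    using assms by (simp add: emeasure_norm_restr Int_absorb1 sets.sets_into_space emeasure_eq_measure
       ennreal_mult''[symmetric])
qed

lemma PiM_Collect_INF:
  fixes F :: "nat \<Rightarrow> 'a measure"
  assumes P: "\<And>i. prob_space (F i)" and H: "\<And>i. H i \<in> sets (F i)"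
  shows "emeasure (PiM UNIV F) {x\<in>space (PiM UNIV F). \<forall>i. x i \<in> H i}
       = (INF N. \<Prod>i<N. emeasure (F i) (H i))"
proof -
  interpret product_prob_space F UNIV
    by (intro product_prob_spaceI P)
  define Z where "Z N = {x\<in>space (PiM UNIV F). \<forall>i\<in>{..<N}. x i \<in> H i}" for N
  have Zs: "Z N \<in> sets (PiM UNIV F)" for N
    unfolding Z_def using H by measurable
  have "{x\<in>space (PiM UNIV F). \<forall>i. x i \<in> H i} = (\<Inter>N. Z N)"
    unfolding Z_def by auto
  moreover have "decseq Z" unfolding Z_def decseq_def by auto
  moreover have "emeasure (PiM UNIV F) (Z N) = (\<Prod>i<N. emeasure (F i) (H i))" for N
    unfolding Z_def using H by (intro emeasure_PiM_Collect) auto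
  moreover have "\<exists>i. emeasure (PiM UNIV F) (Z i) \<noteq> \<top>"
    using P.emeasure_finite by blast
  ultimately show ?thesis
    using INF_emeasure_decseq'[of Z "PiM UNIV F"] Zs by simp
qed

lemma PiM_restr_eq:
  fixes F G :: "nat \<Rightarrow> 'a measure"
  assumes PF: "\<And>i. prob_space (F i)" and PG: "\<And>i. prob_space (G i)"
   and sF: "\<And>i. sets (F i) = sets M" and sG: "\<And>i. sets (G i) = sets M"
   and C: "\<And>i. C i \<in> sets M"
   and eq: "\<And>i A. A \<in> sets M \<Longrightarrow> emeasure (F i) (A \<inter> C i) = emeasure (G i) (A \<inter> C i)"
   and E: "E \<in> sets (PiM UNIV (\<lambda>_. M))"
  shows "emeasure (PiM UNIV F) (E \<inter> {x. \<forall>i. x i \<in> C i}) = emeasure (PiM UNIV G) (E \<inter> {x. \<forall>i. x i \<in> C i})"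
proof -
  have spF: "space (F i) = space M" for i using sF sets_eq_imp_space_eq by blast
  have spG: "space (G i) = space M" for i using sG sets_eq_imp_space_eq by blast
  have setsF: "sets (PiM UNIV F) = sets (PiM UNIV (\<lambda>_. M))"
    by (intro sets_PiM_cong) (auto simp: sF)
  have setsG: "sets (PiM UNIV G) = sets (PiM UNIV (\<lambda>_. M))"
    by (intro sets_PiM_cong) (auto simp: sG)
  have spPF: "space (PiM UNIV F) = space (PiM UNIV (\<lambda>_. M))"
    using setsF sets_eq_imp_space_eq by blast
  have spPG: "space (PiM UNIV G) = space (PiM UNIV (\<lambda>_. M))"
    using setsG sets_eq_imp_space_eq by blast
  define D where "D = {x \<in> space (PiM UNIV (\<lambda>_. M)). \<forall>i. x i \<in> C i}"
  have Ds: "D \<in> sets (PiM UNIV (\<lambda>_. M))"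
    unfolding D_def using C by measurable
  have ED: "E \<inter> {x. \<forall>i. x i \<in> C i} = D \<inter> E"
    using E[THEN sets.sets_into_space] unfolding D_def by auto
  interpret pF: prob_space "PiM UNIV F" by (intro prob_space_PiM PF)
  interpret pG: prob_space "PiM UNIV G" by (intro prob_space_PiM PG)
  have "density (PiM UNIV F) (indicator D) = density (PiM UNIV G) (indicator D)"
  proof (rule measure_eqI_PiM_infinite[where M=F and I=UNIV])
    show "sets (density (PiM UNIV F) (indicator D)) = sets (PiM UNIV F)" by simp
    show "sets (density (PiM UNIV G) (indicator D)) = sets (PiM UNIV F)" by (simp add: setsF setsG)
    show "finite_measure (density (Pi\<^sub>M UNIV F) (indicator D))"
    proof (rule finite_measureI)
      have "emeasure (density (Pi\<^sub>M UNIV F) (indicator D)) (space (density (Pi\<^sub>M UNIV F) (indicator D)))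
         = emeasure (PiM UNIV F) (D \<inter> space (PiM UNIV F))"
        using Ds setsF by (subst emeasure_restricted) auto
      then show "emeasure (density (Pi\<^sub>M UNIV F) (indicator D)) (space (density (Pi\<^sub>M UNIV F) (indicator D))) \<noteq> \<infinity>"
        using pF.emeasure_finite by simp
    qed
    fix A J assume J: "finite J" "J \<subseteq> (UNIV::nat set)" and A: "\<And>i. i \<in> J \<Longrightarrow> A i \<in> sets (F i)"
    define H where "H i = (if i \<in> J then A i else space M) \<inter> C i" for i
    have HF: "H i \<in> sets (F i)" for i using A C sF by (auto simp: H_def)
    have HG: "H i \<in> sets (G i)" for i using HF sF sG by auto
    have Ze: "prod_emb UNIV F J (Pi\<^sub>E J A) \<in> sets (PiM UNIV F)"
      using J A by (intro sets_PiM_I) auto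
    have set1: "D \<inter> prod_emb UNIV F J (Pi\<^sub>E J A) = {x\<in>space (PiM UNIV F). \<forall>i. x i \<in> H i}"
      using A[THEN sets.sets_into_space] C[THEN sets.sets_into_space]
      unfolding D_def H_def prod_emb_def spPF
      by (auto simp: space_PiM PiE_iff spF)
    have set2: "{x\<in>space (PiM UNIV F). \<forall>i. x i \<in> H i} = {x\<in>space (PiM UNIV G). \<forall>i. x i \<in> H i}"
      using spPF spPG by simp
    have "emeasure (density (PiM UNIV F) (indicator D)) (prod_emb UNIV F J (Pi\<^sub>E J A))
        = emeasure (PiM UNIV F) {x\<in>space (PiM UNIV F). \<forall>i. x i \<in> H i}"
      using Ds Ze setsF by (simp add: emeasure_restricted set1)
    also have "\<dots> = (INF N. \<Prod>i<N. emeasure (F i) (H i))"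
      by (rule PiM_Collect_INF[OF PF HF])
    also have "\<dots> = (INF N. \<Prod>i<N. emeasure (G i) (H i))"
    proof -
      have "emeasure (F i) (H i) = emeasure (G i) (H i)" for i
        unfolding H_def using eq[of "if i \<in> J then A i else space M" i] A sF by auto
      then show ?thesis by simp
    qed
    also have "\<dots> = emeasure (PiM UNIV G) {x\<in>space (PiM UNIV G). \<forall>i. x i \<in> H i}"
      by (rule PiM_Collect_INF[OF PG HG, symmetric])
    also have "\<dots> = emeasure (density (PiM UNIV G) (indicator D)) (prod_emb UNIV F J (Pi\<^sub>E J A))"
      using Ds Ze setsF setsG by (simp add: emeasure_restricted set1 set2)
    finally show "emeasure (density (PiM UNIV F) (indicator D)) (prod_emb UNIV F J (Pi\<^sub>E J A))
        = emeasure (density (PiM UNIV G) (indicator D)) (prod_emb UNIV F J (Pi\<^sub>E J A))" .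
  qed
  then have "emeasure (density (PiM UNIV F) (indicator D)) E = emeasure (density (PiM UNIV G) (indicator D)) E"
    by simp
  then show ?thesis
    using Ds E setsF setsG by (simp add: emeasure_restricted ED)
qed

lemma measurable_compwise:
  fixes N :: "nat \<Rightarrow> 'a measure"
  assumes sN: "\<And>i. sets (N i) = sets M" and f: "f \<in> M \<rightarrow>\<^sub>M M"
  shows "(\<lambda>x k. f (x k)) \<in> PiM UNIV N \<rightarrow>\<^sub>M PiM UNIV (\<lambda>_. M)"
proof (rule measurable_PiM_single')
  fix i :: nat
  have "(\<lambda>x. x i) \<in> PiM UNIV N \<rightarrow>\<^sub>M N i" by (rule measurable_component_singleton) simp
  moreover have "f \<in> N i \<rightarrow>\<^sub>M M" by (subst measurable_cong_sets[OF sN[of i] refl]) (rule f)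
  ultimately show "(\<lambda>x. f (x i)) \<in> PiM UNIV N \<rightarrow>\<^sub>M M" by (rule measurable_compose)
next
  show "(\<lambda>x k. f (x k)) \<in> space (PiM UNIV N) \<rightarrow> (\<Pi>\<^sub>E i\<in>UNIV. space M)"
    using f[THEN measurable_space] sets_eq_imp_space_eq[OF sN] by (auto simp: space_PiM)
qed

lemma distr_PiM_comp:
  fixes N :: "nat \<Rightarrow> 'a measure"
  assumes P: "\<And>i. prob_space (N i)" and sN: "\<And>i. sets (N i) = sets M" and f: "f \<in> M \<rightarrow>\<^sub>M M"
  shows "distr (PiM UNIV N) (PiM UNIV (\<lambda>_. M)) (\<lambda>x k. f (x k)) = PiM UNIV (\<lambda>i. distr (N i) M f)"
proof -
  have spN: "space (N i) = space M" for i using sN sets_eq_imp_space_eq by blast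
  have fN: "f \<in> N i \<rightarrow>\<^sub>M M" for i by (subst measurable_cong_sets[OF sN[of i] refl]) (rule f)
  have Pd: "prob_space (distr (N i) M f)" for i
    using P fN by (rule prob_space.prob_space_distr)
  have S: "(\<lambda>x k. f (x k)) \<in> PiM UNIV N \<rightarrow>\<^sub>M PiM UNIV (\<lambda>_. M)"
    by (rule measurable_compwise[OF sN f])
  have setsd: "sets (PiM UNIV (\<lambda>i. distr (N i) M f)) = sets (PiM UNIV (\<lambda>_. M))"
    by (intro sets_PiM_cong) auto
  show ?thesis
  proof (rule measure_eqI_PiM_infinite[where M="\<lambda>i. distr (N i) M f" and I=UNIV, symmetric])
    show "sets (PiM UNIV (\<lambda>i. distr (N i) M f)) = sets (PiM UNIV (\<lambda>i. distr (N i) M f))" by simp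
    show "sets (distr (PiM UNIV N) (PiM UNIV (\<lambda>_. M)) (\<lambda>x k. f (x k))) = sets (PiM UNIV (\<lambda>i. distr (N i) M f))"
      using setsd by simp
    show "finite_measure (PiM UNIV (\<lambda>i. distr (N i) M f))"
      by (rule prob_space.finite_measure[OF prob_space_PiM[OF Pd]])
    fix A J assume J: "finite J" "J \<subseteq> (UNIV::nat set)" and A: "\<And>i. i \<in> J \<Longrightarrow> A i \<in> sets (distr (N i) M f)"
    have As: "A i \<in> sets M" if "i \<in> J" for i using A[OF that] by simp
    have Z: "prod_emb UNIV (\<lambda>i. distr (N i) M f) J (Pi\<^sub>E J A) \<in> sets (PiM UNIV (\<lambda>_. M))"
      unfolding setsd[symmetric] using J A by (intro sets_PiM_I) auto
    have pre: "(\<lambda>x k. f (x k)) -` prod_emb UNIV (\<lambda>i. distr (N i) M f) J (Pi\<^sub>E J A) \<inter> space (PiM UNIV N)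
       = prod_emb UNIV N J (Pi\<^sub>E J (\<lambda>j. f -` A j \<inter> space (N j)))"
      using f[THEN measurable_space] unfolding prod_emb_def space_PiM spN by (auto simp: PiE_iff)

    have "emeasure (PiM UNIV (\<lambda>i. distr (N i) M f)) (prod_emb UNIV (\<lambda>i. distr (N i) M f) J (Pi\<^sub>E J A))
        = (\<Prod>j\<in>J. emeasure (distr (N j) M f) (A j))"
      using J A by (intro emeasure_PiM_emb Pd) auto
    also have "\<dots> = (\<Prod>j\<in>J. emeasure (N j) (f -` A j \<inter> space (N j)))"
      using As fN by (intro prod.cong refl emeasure_distr) auto
    also have "\<dots> = emeasure (PiM UNIV N) (prod_emb UNIV N J (Pi\<^sub>E J (\<lambda>j. f -` A j \<inter> space (N j))))"
      using J As fN by (intro emeasure_PiM_emb[symmetric] P measurable_sets[OF fN]) auto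
    also have "\<dots> = emeasure (distr (PiM UNIV N) (PiM UNIV (\<lambda>_. M)) (\<lambda>x k. f (x k)))
        (prod_emb UNIV (\<lambda>i. distr (N i) M f) J (Pi\<^sub>E J A))"
      using S Z by (subst emeasure_distr) (auto simp: pre)
    finally show "emeasure (PiM UNIV (\<lambda>i. distr (N i) M f)) (prod_emb UNIV (\<lambda>i. distr (N i) M f) J (Pi\<^sub>E J A))
        = emeasure (distr (PiM UNIV N) (PiM UNIV (\<lambda>_. M)) (\<lambda>x k. f (x k)))
        (prod_emb UNIV (\<lambda>i. distr (N i) M f) J (Pi\<^sub>E J A))" .
  qed
qed

lemma tail_null_PiM:
  fixes F :: "nat \<Rightarrow> 'a measure"
  assumes P: "\<And>i. prob_space (F i)" and G: "\<And>k. G k \<in> sets (F k)"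
   and summ: "summable (\<lambda>k. measure (F k) (space (F k) - G k))"
  shows "emeasure (PiM UNIV F) {x \<in> space (PiM UNIV F). \<not>(\<exists>m. \<forall>k\<ge>m. x k \<in> G k)} = 0"
proof -
  interpret product_prob_space F UNIV
    by (intro product_prob_spaceI P)
  define W where "W = {x \<in> space (PiM UNIV F). \<not>(\<exists>m. \<forall>k\<ge>m. x k \<in> G k)}"
  define t where "t k = measure (F k) (space (F k) - G k)" for k
  have t0: "0 \<le> t k" for k unfolding t_def by simp
  have Ws: "W \<in> sets (PiM UNIV F)" unfolding W_def using G by measurable
  have bound: "emeasure (PiM UNIV F) W \<le> ennreal (\<Sum>i. t (i + N))" for N
  proof -
    define U where "U i = {x \<in> space (PiM UNIV F). x (i + N) \<in> space (F (i+N)) - G (i + N)}" for i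
    have Us: "range U \<subseteq> sets (PiM UNIV F)"
      unfolding U_def using G by auto
    have "W \<subseteq> (\<Union>i. U i)"
    proof
      fix x assume x: "x \<in> W"
      then have "\<not> (\<forall>k\<ge>N. x k \<in> G k)" unfolding W_def by blast
      then obtain k where k: "k \<ge> N" "x k \<notin> G k" by auto
      have "x k \<in> space (F k)" using x unfolding W_def by (auto simp: space_PiM)
      then have "x \<in> U (k - N)" using x k unfolding U_def W_def by auto
      then show "x \<in> (\<Union>i. U i)" by blast
    qed
    then have "emeasure (PiM UNIV F) W \<le> emeasure (PiM UNIV F) (\<Union>i. U i)"
      using Us by (intro emeasure_mono) auto
    also have "\<dots> \<le> (\<Sum>i. emeasure (PiM UNIV F) (U i))"
      using Us by (rule emeasure_subadditive_countably)
    also have "\<dots> = (\<Sum>i. ennreal (t (i + N)))"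
    proof -
      have "emeasure (PiM UNIV F) (U i) = ennreal (t (i + N))" for i
        unfolding U_def t_def using G
        by (subst emeasure_PiM_Collect_single) (auto simp: M.emeasure_eq_measure)
      then show ?thesis by simp
    qed
    also have "\<dots> = ennreal (\<Sum>i. t (i + N))"
      using summ t0 unfolding t_def[symmetric]
      by (intro suminf_ennreal2) (auto simp: summable_iff_shift)
    finally show ?thesis .
  qed
  have lim: "(\<lambda>N. ennreal (\<Sum>i. t (i + N))) \<longlonglongrightarrow> ennreal 0"
    using summ unfolding t_def[symmetric]
    by (intro tendsto_ennrealI suminf_exist_split2)
  have "emeasure (PiM UNIV F) W \<le> ennreal 0"
    by (rule tendsto_lowerbound[OF lim]) (auto intro!: always_eventually bound)
  then show ?thesis unfolding W_def by simp
qed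

theorem proposition1p6:
  fixes M :: "'a::polish_space measure"
    and B :: "nat \<Rightarrow> 'a set"
    and T :: "'a \<Rightarrow> 'a"
    and \<nu> :: "(nat \<Rightarrow> 'a) measure"
  assumes standard: "sets M = sets (borel :: 'a measure)"
    and prob: "prob_space M"
    and nonat: "nonatomic M"
    and B_meas: "\<And>n. B n \<in> sets M"
    and B_pos: "\<And>n. measure M (B n) > 0"
    and rip: "restricted_infinite_power M B \<nu>"
    and T_bij: "bij T"
    and T_meas: "T \<in> M \<rightarrow>\<^sub>M M"
    and T_inv_meas: "inv T \<in> M \<rightarrow>\<^sub>M M"
    and T_pres: "preserves M T"
    and summ: "summable (\<lambda>n. measure M ((B n - T ` B n) \<union> (T ` B n - B n)) / measure M (B n))"
  shows "preserves \<nu> (\<lambda>x. \<lambda>k. T (x k))"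
proof -
  interpret prob_space M by (rule prob)
  define X where "X = PiM UNIV (\<lambda>_::nat. M)"
  define S where "S = (\<lambda>x::nat \<Rightarrow> 'a. \<lambda>k. T (x k))"
  define Fam where "Fam n k = (if k < n then M else norm_restr M (B k))" for n k
  define Pn where "Pn n = PiM UNIV (Fam n)" for n
  define c where "c n = ennreal (\<Prod>k<n. 1 / measure M (B k))" for n
  have spM: "space M = UNIV"
    using sets_eq_imp_space_eq[OF standard] by simp
  have inj: "inj T" and surj: "surj T" using T_bij by (auto simp: bij_def)
  have imgT: "T ` A = inv T -` A" for A
  proof
    show "T ` A \<subseteq> inv T -` A" using inv_f_f[OF inj] by auto
    show "inv T -` A \<subseteq> T ` A"
    proof
      fix y assume "y \<in> inv T -` A"
      moreover have "T (inv T y) = y" using surj by (simp add: surj_f_inv_f)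
      ultimately show "y \<in> T ` A" by (metis imageI vimageE)
    qed
  qed
  have TB: "T ` B k \<in> sets M" for k
    unfolding imgT using measurable_sets[OF T_inv_meas B_meas] spM by simp
  have TvB: "T -` A \<in> sets M" if "A \<in> sets M" for A
    using measurable_sets[OF T_meas that] spM by simp
  have pres: "emeasure M (T -` A) = emeasure M A" if "A \<in> sets M" for A
    using T_pres that spM unfolding preserves_def by auto
  have presm: "measure M (T -` A) = measure M A" if "A \<in> sets M" for A
    using pres[OF that] by (simp add: measure_def)
  have sFam: "sets (Fam n k) = sets M" for n k by (simp add: Fam_def)
  have pFam: "prob_space (Fam n k)" for n k
    unfolding Fam_def using B_meas B_pos
    by (auto intro: prob prob_space_norm_restr finite_measure)
  have sX: "sets \<nu> = sets X" using rip unfolding restricted_infinite_power_def X_def by simp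
  have spX: "space X = UNIV" unfolding X_def by (simp add: space_PiM spM)
  have spnu: "space \<nu> = UNIV" using sets_eq_imp_space_eq[OF sX] spX by simp
  have sPn: "sets (Pn n) = sets X" for n
    unfolding Pn_def X_def by (intro sets_PiM_cong) (auto simp: sFam)
  have spPn: "space (Pn n) = UNIV" for n using sets_eq_imp_space_eq[OF sPn[of n]] spX by simp
  have ripeq: "emeasure \<nu> (A \<inter> Bset B n) = c n * emeasure (Pn n) A" if "A \<in> sets X" for A n
    using rip that sX unfolding restricted_infinite_power_def prod_n_def c_def Pn_def Fam_def
    by auto
  have Smeas: "S \<in> X \<rightarrow>\<^sub>M X"
    unfolding S_def X_def by (rule measurable_compwise) (auto intro: T_meas)
  have Smeas_nu: "S \<in> \<nu> \<rightarrow>\<^sub>M \<nu>"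
    using Smeas by (simp add: measurable_cong_sets[OF sX sX])
  have tail_meas: "{x. \<forall>k. n \<le> k \<longrightarrow> x k \<in> G k} \<in> sets X" if "\<And>k. G k \<in> sets M" for G n
  proof -
    have "{x. \<forall>k. n \<le> k \<longrightarrow> x k \<in> G k} = {x \<in> space X. \<forall>k. n \<le> k \<longrightarrow> x k \<in> G k}"
      using spX by simp
    also have "\<dots> \<in> sets X" unfolding X_def using that by measurable
    finally show ?thesis .
  qed
  have Bset_eq: "Bset B n = {x. \<forall>k. n \<le> k \<longrightarrow> x k \<in> B k}" for n
    unfolding Bset_def by auto
  have Bset_meas: "Bset B n \<in> sets X" for n
    unfolding Bset_eq by (rule tail_meas[OF B_meas])
  have nullG: "{x. \<not>(\<exists>m. \<forall>k\<ge>m. x k \<in> G k)} \<inter> Bset B n \<in> null_sets \<nu>"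
    if G: "\<And>k. G k \<in> sets M" and sG: "summable (\<lambda>k. measure M (B k - G k) / measure M (B k))" for G n
  proof -
    define W where "W = {x. \<not>(\<exists>m. \<forall>k\<ge>m. x k \<in> G k)}"
    have "W = space X - (\<Union>m. {x. \<forall>k. m \<le> k \<longrightarrow> x k \<in> G k})"
      unfolding W_def spX by auto
    also have "\<dots> \<in> sets X"
      using tail_meas[OF G] by (intro sets.Diff sets.top sets.countable_UN') auto
    finally have Ws: "W \<in> sets X" .
    have mF: "measure (Fam n k) (space (Fam n k) - G k) = measure M (B k - G k) / measure M (B k)"
      if "n \<le> k" for k
    proof -
      have "emeasure (Fam n k) (space (Fam n k) - G k)
          = ennreal (1 / measure M (B k)) * emeasure M ((UNIV - G k) \<inter> B k)"
      proof -
        have "UNIV - G k \<in> sets M" using sets.compl_sets[OF G[of k]] spM by simp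
        then show ?thesis
          using that B_meas by (simp add: Fam_def emeasure_norm_restr
            sets_eq_imp_space_eq[OF sets_norm_restr] spM)
      qed
      also have "(UNIV - G k) \<inter> B k = B k - G k" by auto
      also have "ennreal (1 / measure M (B k)) * emeasure M (B k - G k)
           = ennreal (measure M (B k - G k) / measure M (B k))"
        by (simp add: emeasure_eq_measure ennreal_mult''[symmetric])
      finally show ?thesis by (simp add: measure_def)
    qed
    have sF: "summable (\<lambda>k. measure (Fam n k) (space (Fam n k) - G k))"
    proof (subst summable_cong)
      show "\<forall>\<^sub>F k in sequentially. measure (Fam n k) (space (Fam n k) - G k)
              = measure M (B k - G k) / measure M (B k)"
        using eventually_ge_at_top[of n] by (rule eventually_mono) (rule mF)
    qed (rule sG)
    have "emeasure (Pn n) {x \<in> space (Pn n). \<not>(\<exists>m. \<forall>k\<ge>m. x k \<in> G k)} = 0"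
      unfolding Pn_def using pFam G sFam sF by (intro tail_null_PiM) auto
    then have P0: "emeasure (Pn n) W = 0" unfolding W_def spPn by simp
    have "emeasure \<nu> (W \<inter> Bset B n) = 0" using ripeq[OF Ws] P0 by simp
    moreover have "W \<inter> Bset B n \<in> sets \<nu>" using Ws Bset_meas sX by auto
    ultimately show ?thesis unfolding W_def by auto
  qed
  define C where "C n k = (if k < n then UNIV else B k \<inter> T ` B k)" for n k
  define D where "D n = {x. \<forall>k. x k \<in> C n k}" for n
  have Cs: "C n k \<in> sets M" for n k
    unfolding C_def using sets.top[of M] spM B_meas TB by auto
  have D_eq: "D n = {x. \<forall>k. n \<le> k \<longrightarrow> x k \<in> B k \<inter> T ` B k}" for n
    unfolding D_def C_def by auto
  have Ds: "D n \<in> sets X" for n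
    unfolding D_eq using B_meas TB by (intro tail_meas) auto
  have D_sub: "D n \<subseteq> Bset B n" for n unfolding D_eq Bset_def by auto
  have SD_sub: "S -` D n \<subseteq> Bset B n" for n
    unfolding D_eq Bset_def S_def using inj by (auto simp: inj_image_mem_iff)
  have Sv: "S -` A \<in> sets X" if "A \<in> sets X" for A
    using measurable_sets[OF Smeas that] spX by simp
  have SPn: "S \<in> Pn n \<rightarrow>\<^sub>M X" for n
    using Smeas by (simp add: measurable_cong_sets[OF sPn refl])
  have key: "emeasure \<nu> (S -` (E \<inter> D n)) = emeasure \<nu> (E \<inter> D n)" if E: "E \<in> sets X" for E n
  proof -
    have ED: "E \<inter> D n \<in> sets X" using E Ds by auto
    have SED: "S -` (E \<inter> D n) \<in> sets X" by (rule Sv[OF ED])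
    have 1: "emeasure \<nu> (E \<inter> D n) = c n * emeasure (Pn n) (E \<inter> D n)"
      using ripeq[OF ED, of n] D_sub[of n] by (simp add: Int_absorb2 inf.absorb1 le_infI2)
    have 2: "emeasure \<nu> (S -` (E \<inter> D n)) = c n * emeasure (Pn n) (S -` (E \<inter> D n))"
    proof -
      have "S -` (E \<inter> D n) \<inter> Bset B n = S -` (E \<inter> D n)" using SD_sub[of n] by auto
      then show ?thesis using ripeq[OF SED, of n] by simp
    qed
    have 3: "emeasure (Pn n) (S -` (E \<inter> D n)) = emeasure (distr (Pn n) X S) (E \<inter> D n)"
      using SPn ED spPn by (subst emeasure_distr) auto
    have 4: "distr (Pn n) X S = PiM UNIV (\<lambda>k. distr (Fam n k) M T)"
      unfolding Pn_def X_def S_def by (rule distr_PiM_comp[OF pFam sFam T_meas])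
    have TF: "T \<in> Fam n k \<rightarrow>\<^sub>M M" for k
      by (subst measurable_cong_sets[OF sFam refl]) (rule T_meas)
    have eq: "emeasure (distr (Fam n k) M T) (A \<inter> C n k) = emeasure (Fam n k) (A \<inter> C n k)"
      if A: "A \<in> sets M" for A k
    proof -
      have spF: "space (Fam n k) = UNIV" using sets_eq_imp_space_eq[OF sFam[of n k]] spM by simp
      have AC: "A \<inter> C n k \<in> sets M" using A Cs by auto
      have "emeasure (distr (Fam n k) M T) (A \<inter> C n k) = emeasure (Fam n k) (T -` (A \<inter> C n k))"
        using TF AC spF by (subst emeasure_distr) auto
      also have "\<dots> = emeasure (Fam n k) (A \<inter> C n k)"
      proof (cases "k < n")
        case True
        then show ?thesis using pres[OF AC] by (simp add: Fam_def)
      next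
        case False
        have TvAC: "T -` (A \<inter> C n k) \<in> sets M" by (rule TvB[OF AC])
        have e1: "T -` (A \<inter> C n k) \<inter> B k = T -` (A \<inter> C n k)"
          using False inj unfolding C_def by (auto simp: inj_image_mem_iff dest: injD)
        have e2: "(A \<inter> C n k) \<inter> B k = A \<inter> C n k"
          using False unfolding C_def by auto
        have FF: "Fam n k = norm_restr M (B k)" using False by (simp add: Fam_def)
        show ?thesis unfolding FF emeasure_norm_restr[OF TvAC B_meas[of k]]
            emeasure_norm_restr[OF AC B_meas[of k]] e1 e2 pres[OF AC] ..
      qed
      finally show ?thesis .
    qed
    have 5: "emeasure (PiM UNIV (\<lambda>k. distr (Fam n k) M T)) (E \<inter> {x. \<forall>k. x k \<in> C n k})
        = emeasure (PiM UNIV (Fam n)) (E \<inter> {x. \<forall>k. x k \<in> C n k})"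
    proof (rule PiM_restr_eq[where M=M])
      show "prob_space (distr (Fam n k) M T)" for k
        using pFam TF by (rule prob_space.prob_space_distr)
    qed (use sFam Cs eq E pFam in \<open>auto simp: X_def\<close>)
    show ?thesis
      using 1 2 3 4 5 by (simp add: D_def Pn_def)
  qed
  have symd: "(B k - T ` B k) \<union> (T ` B k - B k) \<in> sets M" for k using B_meas TB by auto
  have bnd: "measure M (Y) / measure M (B k)
       \<le> measure M ((B k - T ` B k) \<union> (T ` B k - B k)) / measure M (B k)"
    if "Y \<subseteq> (B k - T ` B k) \<union> (T ` B k - B k)" for Y k
    using that symd[of k] B_pos[of k] by (intro divide_right_mono finite_measure_mono) auto
  have s1: "summable (\<lambda>k. measure M (B k - T ` B k) / measure M (B k))"
    by (rule summable_comparison_test'[OF summ, of 0]) (use bnd in auto)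
  have vT: "T -` (T ` B k - B k) = B k - T -` B k" for k
    using inj by (auto simp: inj_image_mem_iff dest: injD)
  have mvT: "measure M (B k - T -` B k) = measure M (T ` B k - B k)" for k
    using presm[of "T ` B k - B k"] TB B_meas vT by auto
  have s2: "summable (\<lambda>k. measure M (B k - T -` B k) / measure M (B k))"
    by (rule summable_comparison_test'[OF summ, of 0]) (use bnd mvT in auto)
  have N0: "UNIV - (\<Union>n. Bset B n) \<in> null_sets \<nu>"
  proof (rule null_setsI)
    show "emeasure \<nu> (UNIV - (\<Union>n. Bset B n)) = 0"
      using rip spnu unfolding restricted_infinite_power_def by simp
    show "UNIV - (\<Union>n. Bset B n) \<in> sets \<nu>"
      using Bset_meas sX spX sets.top[of X] by (auto intro!: sets.Diff sets.countable_UN')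
  qed
  have NTB: "(\<Union>n. {x. \<not>(\<exists>m. \<forall>k\<ge>m. x k \<in> T ` B k)} \<inter> Bset B n) \<in> null_sets \<nu>"
    by (rule null_sets_UN) (rule nullG[OF TB s1])
  have NTvB: "(\<Union>n. {x. \<not>(\<exists>m. \<forall>k\<ge>m. x k \<in> T -` B k)} \<inter> Bset B n) \<in> null_sets \<nu>"
    by (rule null_sets_UN) (rule nullG[OF TvB[OF B_meas] s2])
  have N1: "UNIV - (\<Union>n. D n) \<in> null_sets \<nu>"
  proof (rule null_sets_subset)
    show "UNIV - (\<Union>n. D n) \<in> sets \<nu>"
      using Ds sX spX sets.top[of X] by (auto intro!: sets.Diff sets.countable_UN')
    show "UNIV - (\<Union>n. D n) \<subseteq> (UNIV - (\<Union>n. Bset B n)) \<union>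
        (\<Union>n. {x. \<not>(\<exists>m. \<forall>k\<ge>m. x k \<in> T ` B k)} \<inter> Bset B n)"
    proof
      fix x assume x: "x \<in> UNIV - (\<Union>n. D n)"
      show "x \<in> (UNIV - (\<Union>n. Bset B n)) \<union> (\<Union>n. {x. \<not>(\<exists>m. \<forall>k\<ge>m. x k \<in> T ` B k)} \<inter> Bset B n)"
      proof (cases "\<exists>n. x \<in> Bset B n")
        case True
        then obtain n where n: "x \<in> Bset B n" by auto
        have "\<not>(\<exists>m. \<forall>k\<ge>m. x k \<in> T ` B k)"
        proof
          assume "\<exists>m. \<forall>k\<ge>m. x k \<in> T ` B k"
          then obtain m where m: "\<forall>k\<ge>m. x k \<in> T ` B k" by auto
          have "x \<in> D (max n m)" using n m unfolding D_eq Bset_def by auto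
          then show False using x by auto
        qed
        then show ?thesis using n by auto
      qed auto
    qed
  qed (use N0 NTB in auto)
  have N2: "UNIV - (\<Union>n. S -` D n) \<in> null_sets \<nu>"
  proof (rule null_sets_subset)
    show "UNIV - (\<Union>n. S -` D n) \<in> sets \<nu>"
      using Ds Sv sX spX sets.top[of X] by (auto intro!: sets.Diff sets.countable_UN')
    show "UNIV - (\<Union>n. S -` D n) \<subseteq> (UNIV - (\<Union>n. Bset B n)) \<union>
        (\<Union>n. {x. \<not>(\<exists>m. \<forall>k\<ge>m. x k \<in> T -` B k)} \<inter> Bset B n)"
    proof
      fix x assume x: "x \<in> UNIV - (\<Union>n. S -` D n)"
      show "x \<in> (UNIV - (\<Union>n. Bset B n)) \<union> (\<Union>n. {x. \<not>(\<exists>m. \<forall>k\<ge>m. x k \<in> T -` B k)} \<inter> Bset B n)"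
      proof (cases "\<exists>n. x \<in> Bset B n")
        case True
        then obtain n where n: "x \<in> Bset B n" by auto
        have "\<not>(\<exists>m. \<forall>k\<ge>m. x k \<in> T -` B k)"
        proof
          assume "\<exists>m. \<forall>k\<ge>m. x k \<in> T -` B k"
          then obtain m where m: "\<forall>k\<ge>m. x k \<in> T -` B k" by auto
          have "x \<in> S -` D (max n m)" using n m unfolding D_eq Bset_def S_def by auto
          then show False using x by auto
        qed
        then show ?thesis using n by auto
      qed auto
    qed
  qed (use N0 NTvB in auto)
  have incD: "incseq D" unfolding incseq_def D_eq by auto
  show ?thesis unfolding preserves_def
  proof (intro conjI ballI)
    show "(\<lambda>x k. T (x k)) \<in> \<nu> \<rightarrow>\<^sub>M \<nu>" using Smeas_nu unfolding S_def .
    fix A assume A: "A \<in> sets \<nu>"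
    then have AX: "A \<in> sets X" using sX by simp
    have "emeasure \<nu> A = emeasure \<nu> (A - (UNIV - (\<Union>n. D n)))"
      using emeasure_Diff_null_set[OF N1 A] by simp
    also have "A - (UNIV - (\<Union>n. D n)) = (\<Union>n. A \<inter> D n)" by auto
    also have "emeasure \<nu> (\<Union>n. A \<inter> D n) = (SUP n. emeasure \<nu> (A \<inter> D n))"
      using AX Ds sX incD
      by (intro SUP_emeasure_incseq[symmetric]) (auto simp: incseq_def, blast)
    finally have e1: "emeasure \<nu> A = (SUP n. emeasure \<nu> (A \<inter> D n))" .
    have SA: "S -` A \<in> sets \<nu>" using Sv[OF AX] sX by simp
    have "emeasure \<nu> (S -` A) = emeasure \<nu> (S -` A - (UNIV - (\<Union>n. S -` D n)))"
      using emeasure_Diff_null_set[OF N2 SA] by simp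
    also have "S -` A - (UNIV - (\<Union>n. S -` D n)) = (\<Union>n. S -` (A \<inter> D n))" by auto
    also have "emeasure \<nu> (\<Union>n. S -` (A \<inter> D n)) = (SUP n. emeasure \<nu> (S -` (A \<inter> D n)))"
      using AX Ds sX incD Sv
      by (intro SUP_emeasure_incseq[symmetric]) (auto simp: incseq_def, blast+)
    also have "\<dots> = (SUP n. emeasure \<nu> (A \<inter> D n))"
      using key[OF AX] by simp
    finally have e2: "emeasure \<nu> (S -` A) = (SUP n. emeasure \<nu> (A \<inter> D n))" .
    show "emeasure \<nu> ((\<lambda>x k. T (x k)) -` A \<inter> space \<nu>) = emeasure \<nu> A"
      using e1 e2 spnu unfolding S_def by simp
  qed
qed

end
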